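(* Let $N\ge1$ be an integer and let $v_N>e^{x_N}$ be a number such that for every $u>v_N$, $\operatorname{li}(f_N(u))-u=\theta\cdot13\,(N+1)!\,\frac{u(\log\log u)^N}{\log^{N+1}u}$ for some $|\theta|\le1$ (such $v_N$ exists). Then for every $u\ge v_N$ there is $\theta$ with $|\theta|\le1$ such that \[ \operatorname{ali}(u)=f_N(u)+26\,\theta\,(N+1)!\,u\Bigl(\frac{\log\log u}{\log u}\Bigr)^N. \]
   Context: $\operatorname{li}(x)=\mathrm{p.v.}\int_0^x\frac{dt}{\log t}$ for real $x>1$, and $\operatorname{ali}\colon\mathbb{R}\to(1,\infty)$ is its inverse function. The polynomials $P_n(y)$ are defined by $P_0(y)=y-1$ and, for $n\ge1$, $P_n=nP_{n-1}-P'_{n-1}+\frac{1}{n}\sum_{k=1}^{n-1}k\{(k-1)P_{k-1}-P_k-P'_{k-1}\}P_{n-k-1}$. $f_N$ is defined by $f_N(e^x)=xe^x\bigl(1+\sum_{n=1}^N\frac{P_{n-1}(\log x)}{x^n}\bigr)$. The integers $a_n$: $a_1=1$, $a_n=n\cdot n!+\sum_{k=1}^{n-1}k!\,a_{n-k}$. Let $c_N>0$ be a constant with $x(1-\sum_{n=1}^N n!x^{-n})\ge1$ for all real $x\ge c_N$, $d_N>0$ a constant such that for all complex $|x|\ge d_N$, $\log(1-\sum_{n=1}^N n!x^{-n})^{-1}=\sum_{n=1}^N\frac{a_n}{n}x^{-n}+\theta\frac{a_{N+1}}{N+1}x^{-N-1}$ with $|\theta|\le1$, $\alpha_N=\max(e,c_N,d_N)$,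 $\beta_N\ge e$ the solution of $x/\log x=\alpha_N$, and $x_N=\max(\beta_N,4(N+1)/3,e^2)$. *)

theory Defs
  imports "HOL-Analysis.Analysis" "HOL-Computational_Algebra.Polynomial"
begin

definition li :: "real \<Rightarrow> real" where
  "li x = Lim (at_right 0)
     (\<lambda>\<epsilon>. integral {0..1-\<epsilon>} (\<lambda>t. 1 / ln t) + integral {1+\<epsilon>..x} (\<lambda>t. 1 / ln t))"

definition ali :: "real \<Rightarrow> real" where
  "ali u = (THE x. x > 1 \<and> li x = u)"

function P :: "nat \<Rightarrow> real poly" where
  "P 0 = [:-1, 1:]"
| "P (Suc m) =
     smult (real (Suc m)) (P m) - pderiv (P m)
     + smult (1 / real (Suc m))
        (\<Sum>k\<in>{1..m}. smult (real k)
            (smult (real k - 1) (P (k - 1)) - P k - pderiv (P (k - 1))) * P (m - k))"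
  by pat_completeness auto
termination
  by (relation "Wellfounded.measure id") auto

text \<open>f_N(e^x) = x e^x (1 + sum_{n=1}^N P_{n-1}(log x) / x^n), written in terms of u = e^x.\<close>
definition f :: "nat \<Rightarrow> real \<Rightarrow> real" where
  "f N u = ln u * u * (1 + (\<Sum>n=1..N. poly (P (n - 1)) (ln (ln u)) / (ln u) ^ n))"

text \<open>The integers a_n (a_0 is unused and set to 0).\<close>
function a :: "nat \<Rightarrow> int" where
  "a 0 = 0"
| "a (Suc 0) = 1"
| "a (Suc (Suc m)) = int (Suc (Suc m)) * fact (Suc (Suc m))
     + (\<Sum>k\<in>{1..Suc m}. fact k * a (Suc (Suc m) - k))"
  by pat_completeness auto
termination
  by (relation "Wellfounded.measure id") auto

end

theory Submission
  imports Defs "HOL-Real_Asymp.Real_Asymp"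
begin


definition HH :: "real \<Rightarrow> real" where
  "HH t = (if t = 0 then 1 else if t = 1 then 1/2 else 1/ln t - 1/(t-1))"

lemma HH_cont: "continuous_on {0..2} HH"
proof -
  have "continuous (at t within {0..2}) HH" if t: "t \<in> {0..2}" for t
  proof -
    consider "t = 0" | "t = 1" | "t > 0" "t \<noteq> 1" using t by force
    then show ?thesis
    proof cases
      case 1
      have lim: "((\<lambda>t::real. 1/ln t - 1/(t-1)) \<longlongrightarrow> 1) (at_right 0)" by real_asymp
      have ev: "\<forall>\<^sub>F s in at_right 0. 1/ln s - 1/(s-1) = HH s"
        unfolding eventually_at_right_field
        by (rule exI[of _ 1]) (auto simp: HH_def)
      have "(HH \<longlongrightarrow> 1) (at_right 0)" using Lim_transform_eventually[OF lim ev] .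
      then show ?thesis using 1 by (simp add: continuous_within at_within_Icc_at_right HH_def)
    next
      case 2
      have lim: "((\<lambda>t::real. 1/ln t - 1/(t-1)) \<longlongrightarrow> 1/2) (at 1)" by real_asymp
      have ev: "\<forall>\<^sub>F s in at 1. 1/ln s - 1/(s-1) = HH s"
        unfolding eventually_at
        by (rule exI[of _ "1/2"]) (auto simp: HH_def dist_real_def)
      have l: "(HH \<longlongrightarrow> 1/2) (at 1)" using Lim_transform_eventually[OF lim ev] .
      have "HH 1 = 1/2" by (simp add: HH_def)
      with l have "(HH \<longlongrightarrow> HH 1) (at 1)" by metis
      then show ?thesis using 2 by (metis continuous_within tendsto_within_subset subset_UNIV
         )
    next
      case 3
      have ev: "\<forall>\<^sub>F s in nhds t. HH s = 1/ln s - 1/(s-1)"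
      proof -
        have "open ({0<..} \<inter> -{1::real})" by auto
        moreover have "t \<in> {0<..} \<inter> -{1::real}" using 3 by auto
        ultimately have "\<forall>\<^sub>F s in nhds t. s \<in> {0<..} \<inter> -{1::real}"
          by (rule eventually_nhds_in_open)
        then show ?thesis by eventually_elim (auto simp: HH_def)
      qed
      have "isCont (\<lambda>s. 1/ln s - 1/(s-1)) t"
        using 3 by (intro continuous_intros) auto
      then have "isCont HH t" using isCont_cong[OF ev] by simp
      then show ?thesis by (simp add: continuous_at_imp_continuous_at_within)
    qed
  qed
  then show ?thesis by (simp add: continuous_on_eq_continuous_within)
qed

lemma HH_nonneg: "t \<in> {0..2} \<Longrightarrow> HH t \<ge> 0"
proof -
  assume t: "t \<in> {0..2}"
  consider "t = 0" | "t = 1" | "0 < t" "t < 1" | "1 < t" using t by force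
  then show ?thesis
  proof cases
    case 3
    have a: "ln t \<le> t - 1" using 3 by (intro ln_le_minus_one) auto
    have b: "ln t < 0" using 3 by auto
    have "1/(t-1) \<le> 1 / ln t" using a b 3 by (simp add: divide_simps)
    then show ?thesis using 3 by (simp add: HH_def)
  next
    case 4
    have a: "ln t \<le> t - 1" using 4 by (intro ln_le_minus_one) auto
    have b: "ln t > 0" using 4 by auto
    have "1/(t-1) \<le> 1 / ln t" using a b 4 by (simp add: divide_simps)
    then show ?thesis using 4 by (simp add: HH_def)
  qed (auto simp: HH_def)
qed

lemma inv_ln_eq: "t \<in> {0..2} \<Longrightarrow> t \<noteq> 1 \<Longrightarrow> 1 / ln t = HH t + 1/(t-1)"
  by (auto simp: HH_def)

lemma cont_inv_ln: assumes "1 < lo" shows "continuous_on {lo..hi} (\<lambda>t::real. 1 / ln t)"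
  using assms by (auto intro!: continuous_intros)

lemma int_inv_ln: assumes "1 < lo" shows "(\<lambda>t::real. 1 / ln t) integrable_on {lo..hi}"
  using assms by (intro integrable_continuous_interval cont_inv_ln)

lemma int_HH: "0 \<le> lo \<Longrightarrow> hi \<le> 2 \<Longrightarrow> HH integrable_on {lo..hi}"
  by (rule integrable_continuous_interval, rule continuous_on_subset[OF HH_cont]) auto

lemma int_left:
  assumes "0 < e" "e < 1"
  shows "integral {0..1-e} (\<lambda>t. 1 / ln t) = integral {0..1-e} HH + ln e"
proof -
  have d: "((\<lambda>t. ln (1 - t)) has_vector_derivative (1/(t-1))) (at t within {0..1-e})"
    if "t \<in> {0..1-e}" for t
  proof -
    have "((\<lambda>t. ln (1 - t)) has_real_derivative (1/(1-t)) * (0 - 1)) (at t within {0..1-e})"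
      using that assms by (intro derivative_eq_intros) auto
    moreover have "(1/(1-t)) * (0 - 1) = 1/(t-1)" using that assms by (auto simp: field_simps)
    ultimately show ?thesis by (simp add: has_real_derivative_iff_has_vector_derivative)
  qed
  have i1: "((\<lambda>t. 1/(t-1)) has_integral (ln e - 0)) {0..1-e}"
    using fundamental_theorem_of_calculus[OF _ d] assms by simp
  have i2: "(HH has_integral integral {0..1-e} HH) {0..1-e}"
    using int_HH[of 0 "1-e"] assms by (simp add: integrable_integral)
  have "((\<lambda>t. HH t + 1/(t-1)) has_integral (integral {0..1-e} HH + ln e)) {0..1-e}"
    using has_integral_add[OF i2 i1] by simp
  moreover have "\<And>t. t \<in> {0..1-e} \<Longrightarrow> HH t + 1/(t-1) = 1 / ln t"
    using assms by (subst inv_ln_eq) auto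
  ultimately have "((\<lambda>t. 1 / ln t) has_integral (integral {0..1-e} HH + ln e)) {0..1-e}"
    using has_integral_cong by (metis (mono_tags, lifting))
  then show ?thesis by (rule integral_unique)
qed

lemma int_right:
  assumes "0 < e" "e < 1"
  shows "integral {1+e..2} (\<lambda>t. 1 / ln t) = integral {1+e..2} HH - ln e"
proof -
  have d: "((\<lambda>t. ln (t - 1)) has_vector_derivative (1/(t-1))) (at t within {1+e..2})"
    if "t \<in> {1+e..2}" for t
  proof -
    have "((\<lambda>t. ln (t - 1)) has_real_derivative (1/(t-1)) * (1 - 0)) (at t within {1+e..2})"
      using that assms by (intro derivative_eq_intros) auto
    then show ?thesis by (simp add: has_real_derivative_iff_has_vector_derivative)
  qed
  have i1: "((\<lambda>t. 1/(t-1)) has_integral (ln (2 - 1) - ln (1 + e - 1))) {1+e..2}"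
    using fundamental_theorem_of_calculus[OF _ d] assms by simp
  have i2: "(HH has_integral integral {1+e..2} HH) {1+e..2}"
    using int_HH[of "1+e" 2] assms by (simp add: integrable_integral)
  have "((\<lambda>t. HH t + 1/(t-1)) has_integral (integral {1+e..2} HH - ln e)) {1+e..2}"
    using has_integral_add[OF i2 i1] by simp
  moreover have "\<And>t. t \<in> {1+e..2} \<Longrightarrow> HH t + 1/(t-1) = 1 / ln t"
    using assms by (subst inv_ln_eq) auto
  ultimately have "((\<lambda>t. 1 / ln t) has_integral (integral {1+e..2} HH - ln e)) {1+e..2}"
    using has_integral_cong by (metis (mono_tags, lifting))
  then show ?thesis by (rule integral_unique)
qed

definition ell :: real where "ell = integral {0..2} HH"

definition LI :: "real \<Rightarrow> real" where
  "LI x = ell + (if 2 \<le> x then integral {2..x} (\<lambda>t. 1 / ln t) else - integral {x..2} (\<lambda>t. 1 / ln t))"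

lemma g2_lim:
  "((\<lambda>e. integral {0..1-e} (\<lambda>t::real. 1 / ln t) + integral {1+e..2} (\<lambda>t. 1 / ln t)) \<longlongrightarrow> ell) (at_right 0)"
proof -
  define FF where "FF s = integral {0..s} HH" for s
  have cFF: "continuous_on {0..2} FF"
    unfolding FF_def by (rule indefinite_integral_continuous_1) (rule int_HH, auto)
  have ic: "isCont FF 1"
    by (rule continuous_on_interior[OF cFF]) auto
  have l1: "((\<lambda>e::real. 1 - e) \<longlongrightarrow> 1) (at_right 0)"
    by (auto intro!: tendsto_eq_intros)
  have l2: "((\<lambda>e::real. 1 + e) \<longlongrightarrow> 1) (at_right 0)"
    by (auto intro!: tendsto_eq_intros)
  have "((\<lambda>e. FF (1 - e) + (ell - FF (1 + e))) \<longlongrightarrow> FF 1 + (ell - FF 1)) (at_right 0)"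
    by (intro tendsto_add tendsto_diff tendsto_const isCont_tendsto_compose[OF ic l1]
        isCont_tendsto_compose[OF ic l2])
  then have lim: "((\<lambda>e. FF (1 - e) + (ell - FF (1 + e))) \<longlongrightarrow> ell) (at_right 0)" by simp
  have ev: "\<forall>\<^sub>F e in at_right 0. FF (1 - e) + (ell - FF (1 + e)) =
      integral {0..1-e} (\<lambda>t::real. 1 / ln t) + integral {1+e..2} (\<lambda>t. 1 / ln t)"
    unfolding eventually_at_right_field
  proof (rule exI[of _ 1], intro conjI allI impI)
    fix e :: real assume e: "0 < e" "e < 1"
    have c: "integral {0..1+e} HH + integral {1+e..2} HH = integral {0..2} HH"
      using e by (intro Henstock_Kurzweil_Integration.integral_combine int_HH) auto
    show "FF (1 - e) + (ell - FF (1 + e)) =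
      integral {0..1-e} (\<lambda>t::real. 1 / ln t) + integral {1+e..2} (\<lambda>t. 1 / ln t)"
      using e c by (simp add: int_left int_right FF_def ell_def)
  qed simp
  show ?thesis using Lim_transform_eventually[OF lim ev] .
qed

lemma li_eq: assumes x: "1 < x" shows "li x = LI x"
proof -
  have ev: "\<forall>\<^sub>F e in at_right 0.
      (integral {0..1-e} (\<lambda>t::real. 1 / ln t) + integral {1+e..2} (\<lambda>t. 1 / ln t)) + (LI x - ell) =
      integral {0..1-e} (\<lambda>t::real. 1 / ln t) + integral {1+e..x} (\<lambda>t. 1 / ln t)"
    unfolding eventually_at_right_field
  proof (rule exI[of _ "min 1 (x-1)"], intro conjI allI impI)
    fix e :: real assume e: "0 < e" "e < min 1 (x - 1)"
    show "(integral {0..1-e} (\<lambda>t::real. 1 / ln t) + integral {1+e..2} (\<lambda>t. 1 / ln t)) + (LI x - ell) =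
      integral {0..1-e} (\<lambda>t::real. 1 / ln t) + integral {1+e..x} (\<lambda>t. 1 / ln t)"
    proof (cases "2 \<le> x")
      case True
      have "integral {1+e..2} (\<lambda>t::real. 1 / ln t) + integral {2..x} (\<lambda>t. 1 / ln t)
          = integral {1+e..x} (\<lambda>t. 1 / ln t)"
        using e True by (intro Henstock_Kurzweil_Integration.integral_combine int_inv_ln) auto
      then show ?thesis using True by (simp add: LI_def)
    next
      case False
      have "integral {1+e..x} (\<lambda>t::real. 1 / ln t) + integral {x..2} (\<lambda>t. 1 / ln t)
          = integral {1+e..2} (\<lambda>t. 1 / ln t)"
        using e False by (intro Henstock_Kurzweil_Integration.integral_combine int_inv_ln) auto
      then show ?thesis using False by (simp add: LI_def)
    qed
  qed (use x in simp)
  have "((\<lambda>e. (integral {0..1-e} (\<lambda>t::real. 1 / ln t) + integral {1+e..2} (\<lambda>t. 1 / ln t)) + (LI x - ell))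
      \<longlongrightarrow> ell + (LI x - ell)) (at_right 0)"
    by (intro tendsto_add g2_lim tendsto_const)
  then have "((\<lambda>e. integral {0..1-e} (\<lambda>t::real. 1 / ln t) + integral {1+e..x} (\<lambda>t. 1 / ln t))
      \<longlongrightarrow> LI x) (at_right 0)"
    using Lim_transform_eventually[OF _ ev] by simp
  then show ?thesis unfolding li_def
    by (intro tendsto_Lim) (auto simp: trivial_limit_at_right_real)
qed

lemma LI_diff:
  assumes "1 < lo" "lo \<le> hi"
  shows "LI hi - LI lo = integral {lo..hi} (\<lambda>t. 1 / ln t)"
proof -
  consider "2 \<le> lo" | "hi < 2" | "lo < 2" "2 \<le> hi" by linarith
  then show ?thesis
  proof cases
    case 1
    have "integral {2..lo} (\<lambda>t::real. 1 / ln t) + integral {lo..hi} (\<lambda>t. 1 / ln t)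
        = integral {2..hi} (\<lambda>t. 1 / ln t)"
      using assms 1 by (intro Henstock_Kurzweil_Integration.integral_combine int_inv_ln) auto
    then show ?thesis using assms 1 by (simp add: LI_def)
  next
    case 2
    have "integral {lo..hi} (\<lambda>t::real. 1 / ln t) + integral {hi..2} (\<lambda>t. 1 / ln t)
        = integral {lo..2} (\<lambda>t. 1 / ln t)"
      using assms 2 by (intro Henstock_Kurzweil_Integration.integral_combine int_inv_ln) auto
    then show ?thesis using assms 2 by (simp add: LI_def)
  next
    case 3
    have "integral {lo..2} (\<lambda>t::real. 1 / ln t) + integral {2..hi} (\<lambda>t. 1 / ln t)
        = integral {lo..hi} (\<lambda>t. 1 / ln t)"
      using assms 3 by (intro Henstock_Kurzweil_Integration.integral_combine int_inv_ln) auto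
    then show ?thesis using assms 3 by (simp add: LI_def)
  qed
qed

lemma int_bounds:
  fixes lo hi :: real
  assumes "1 < lo" "lo \<le> hi"
  shows "(hi - lo) / ln hi \<le> integral {lo..hi} (\<lambda>t. 1 / ln t)"
    and "integral {lo..hi} (\<lambda>t. 1 / ln t) \<le> (hi - lo) / ln lo"
proof -
  have "integral {lo..hi} (\<lambda>t::real. 1 / ln hi) \<le> integral {lo..hi} (\<lambda>t. 1 / ln t)"
  proof (rule integral_le)
    fix t assume t: "t \<in> {lo..hi}"
    then have "ln t \<le> ln hi" "0 < ln t" using assms by auto
    then show "1 / ln hi \<le> 1 / ln t" by (simp add: divide_simps)
  qed (use assms in \<open>auto intro: int_inv_ln\<close>)
  then show "(hi - lo) / ln hi \<le> integral {lo..hi} (\<lambda>t. 1 / ln t)" using assms by simp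
  have "integral {lo..hi} (\<lambda>t. 1 / ln t) \<le> integral {lo..hi} (\<lambda>t::real. 1 / ln lo)"
  proof (rule integral_le)
    fix t assume t: "t \<in> {lo..hi}"
    then have "ln lo \<le> ln t" "0 < ln lo" using assms by auto
    then show "1 / ln t \<le> 1 / ln lo" by (simp add: divide_simps)
  qed (use assms in \<open>auto intro: int_inv_ln\<close>)
  then show "integral {lo..hi} (\<lambda>t. 1 / ln t) \<le> (hi - lo) / ln lo" using assms by simp
qed

lemma LI_lower:
  assumes "1 < lo" "lo \<le> hi"
  shows "hi - lo \<le> (LI hi - LI lo) * ln hi"
proof -
  have "(hi - lo) / ln hi \<le> LI hi - LI lo" using int_bounds(1)[OF assms] LI_diff[OF assms] by simp
  moreover have "ln hi > 0" using assms by auto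
  ultimately show ?thesis by (simp add: divide_simps)
qed

lemma LI_upper:
  assumes "1 < lo" "lo \<le> hi"
  shows "LI hi - LI lo \<le> (hi - lo) / ln lo"
  using int_bounds(2)[OF assms] LI_diff[OF assms] by simp

lemma LI_strict_mono:
  assumes "1 < lo" "lo < hi"
  shows "LI lo < LI hi"
proof -
  have "hi - lo \<le> (LI hi - LI lo) * ln hi" using LI_lower assms by auto
  moreover have "ln hi > 0" using assms by auto
  ultimately show ?thesis using assms by (smt (verit) mult_nonpos_nonneg)
qed

lemma LI_cont:
  assumes "1 < lo"
  shows "continuous_on {lo..hi} LI"
proof -
  have "continuous_on {lo..hi} (\<lambda>x. LI lo + integral {lo..x} (\<lambda>t. 1 / ln t))"
    using assms by (intro continuous_intros indefinite_integral_continuous_1 int_inv_ln)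
  moreover have "\<And>x. x \<in> {lo..hi} \<Longrightarrow> LI lo + integral {lo..x} (\<lambda>t. 1 / ln t) = LI x"
    using LI_diff assms by force
  ultimately show ?thesis using continuous_on_cong by (metis (no_types, lifting))
qed

lemma ell_nonneg: "0 \<le> ell"
  unfolding ell_def by (rule integral_nonneg) (auto intro: int_HH HH_nonneg)

lemma LI_ge:
  assumes "2 \<le> x" shows "(x - 2) / ln x \<le> LI x"
proof -
  have "(x - 2) / ln x \<le> integral {2..x} (\<lambda>t. 1 / ln t)" using int_bounds(1)[of 2 x] assms by simp
  then show ?thesis using assms ell_nonneg by (simp add: LI_def)
qed

lemma LI_near1:
  assumes "1 < x" "x \<le> 2" shows "LI x \<le> ell + ln (x - 1)"
proof -
  have d: "((\<lambda>t. ln (t - 1)) has_vector_derivative (1/(t-1))) (at t within {x..2})"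
    if "t \<in> {x..2}" for t
  proof -
    have "((\<lambda>t. ln (t - 1)) has_real_derivative (1/(t-1)) * (1 - 0)) (at t within {x..2})"
      using that assms by (intro derivative_eq_intros) auto
    then show ?thesis by (simp add: has_real_derivative_iff_has_vector_derivative)
  qed
  have i1: "((\<lambda>t. 1/(t-1)) has_integral (ln (2 - 1) - ln (x - 1))) {x..2}"
    using fundamental_theorem_of_calculus[OF _ d] assms by simp
  have "- ln (x - 1) \<le> integral {x..2} (\<lambda>t. 1 / ln t)"
  proof (rule has_integral_le[OF i1[simplified]])
    show "((\<lambda>t. 1 / ln t) has_integral integral {x..2} (\<lambda>t. 1 / ln t)) {x..2}"
      using assms by (intro integrable_integral int_inv_ln)
    fix t assume t: "t \<in> {x..2}"
    then have "ln t \<le> t - 1" "0 < ln t" using assms by (auto intro: ln_le_minus_one)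
    then show "1 / (t - 1) \<le> 1 / ln t" by (simp add: divide_simps)
  qed
  then show ?thesis using assms by (auto simp: LI_def)
qed



lemma exp2_gt: "exp (2::real) > 7"
proof -
  have "(1 + 2 / 40) ^ 40 \<le> exp (2::real)"
    using exp_ge_one_plus_x_over_n_power_n[of 40 2] by simp
  moreover have "(7::real) < (1 + 2 / 40) ^ 40" by (simp add: power_divide)
  ultimately show ?thesis by linarith
qed

lemma exp7_gt: "exp (7::real) > 291"
proof -
  have "(1 + 7 / 14) ^ 14 \<le> exp (7::real)"
    using exp_ge_one_plus_x_over_n_power_n[of 14 7] by simp
  moreover have "(291::real) < (1 + 7 / 14) ^ 14" by (simp add: power_divide)
  ultimately show ?thesis by linarith
qed

lemma exp_ge_23: assumes "(7::real) \<le> L" shows "23 * L \<le> exp L"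
proof -
  have "exp L = exp 7 * exp (L - 7)" by (simp flip: exp_add)
  moreover have "exp (L - 7) \<ge> 1 + (L - 7)" by (rule exp_ge_add_one_self)
  moreover have "291 * (L - 6) \<le> exp 7 * exp (L - 7)"
    using exp7_gt assms \<open>exp (L - 7) \<ge> 1 + (L - 7)\<close> by (intro mult_mono) auto
  ultimately have "exp L \<ge> 291 * (L - 6)" by simp
  then have "exp L \<ge> 291 * L - 1746" by (simp add: algebra_simps)
  then show ?thesis using assms by linarith
qed

lemma x_over_ln_mono:
  fixes s t :: real
  assumes "exp 1 \<le> s" "s \<le> t"
  shows "s / ln s \<le> t / ln t"
proof (rule DERIV_nonneg_imp_nondecreasing[OF assms(2)])
  fix x assume x: "s \<le> x" "x \<le> t"
  have x1: "exp 1 \<le> x" using x assms by linarith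
  have xpos: "0 < x" using x1 by (smt (verit) exp_gt_zero)
  have lnx: "1 \<le> ln x" using x1 xpos by (metis ln_exp ln_le_cancel_iff exp_gt_zero)
  have "((\<lambda>x. x / ln x) has_real_derivative (1 * ln x - x * (1 / x)) / (ln x * ln x)) (at x)"
    using xpos lnx by (intro derivative_eq_intros) auto
  moreover have "0 \<le> (1 * ln x - x * (1 / x)) / (ln x * ln x)" using xpos lnx by simp
  ultimately show "\<exists>y. ((\<lambda>x. x / ln x) has_real_derivative y) (at x) \<and> 0 \<le> y" by blast
qed



lemma poly_exp_lim: "((\<lambda>y::real. poly p y * y ^ k / exp y) \<longlongrightarrow> 0) at_top"
proof (induct p arbitrary: k rule: pCons_induct)
  fix k show "((\<lambda>y::real. poly 0 y * y ^ k / exp y) \<longlongrightarrow> 0) at_top" by simp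
next
  fix c :: real and p :: "real poly" and k
  assume "c \<noteq> 0 \<or> p \<noteq> 0" and IH: "\<And>k. ((\<lambda>y::real. poly p y * y ^ k / exp y) \<longlongrightarrow> 0) at_top"
  have "((\<lambda>y::real. c * (y ^ k / exp y) + poly p y * y ^ Suc k / exp y) \<longlongrightarrow> c * 0 + 0) at_top"
    by (intro tendsto_add tendsto_mult tendsto_const tendsto_power_div_exp_0 IH)
  moreover have "\<And>y. c * (y ^ k / exp y) + poly p y * y ^ Suc k / exp y = poly (pCons c p) y * y ^ k / exp y"
    by (simp add: algebra_simps add_divide_distrib)
  ultimately show "((\<lambda>y::real. poly (pCons c p) y * y ^ k / exp y) \<longlongrightarrow> 0) at_top" by simp
qed

lemma poly_ln_lim:
  assumes "1 \<le> n"
  shows "((\<lambda>L::real. poly p (ln L) / L ^ n) \<longlongrightarrow> 0) at_top"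
proof -
  have a: "((\<lambda>L::real. poly p (ln L) * ln L ^ 0 / exp (ln L)) \<longlongrightarrow> 0) at_top"
    by (rule filterlim_compose[OF poly_exp_lim ln_at_top])
  have b: "((\<lambda>L::real. (1 / L) ^ (n - 1)) \<longlongrightarrow> 0 ^ (n - 1)) at_top"
    by (intro tendsto_power tendsto_divide_0[OF tendsto_const] filterlim_at_top_imp_at_infinity filterlim_ident)
  have "((\<lambda>L::real. poly p (ln L) * ln L ^ 0 / exp (ln L) * (1 / L) ^ (n - 1)) \<longlongrightarrow> 0 * 0 ^ (n - 1)) at_top"
    by (intro tendsto_mult a b)
  moreover have "\<forall>\<^sub>F L in at_top. poly p (ln L) * ln L ^ 0 / exp (ln L) * (1 / L) ^ (n - 1) = poly p (ln L) / L ^ n"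
    using eventually_gt_at_top[of 0]
  proof eventually_elim
    case (elim L)
    have "L ^ n = L * L ^ (n - 1)" using assms by (metis power_eq_if not_one_le_zero)
    then show ?case using elim by (simp add: power_one_over)
  qed
  ultimately show ?thesis using Lim_transform_eventually by fastforce
qed

lemma S_lim:
  "((\<lambda>u::real. \<Sum>n=1..N. poly (P (n - 1)) (ln (ln u)) / (ln u) ^ n) \<longlongrightarrow> 0) at_top"
proof -
  have "((\<lambda>u::real. \<Sum>n=1..N. poly (P (n - 1)) (ln (ln u)) / (ln u) ^ n) \<longlongrightarrow> (\<Sum>n=1..N. (0::real))) at_top"
  proof (rule tendsto_sum)
    fix n assume "n \<in> {1..N}"
    then show "((\<lambda>u::real. poly (P (n - 1)) (ln (ln u)) / (ln u) ^ n) \<longlongrightarrow> 0) at_top"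
      by (intro filterlim_compose[OF poly_ln_lim ln_at_top]) auto
  qed
  then show ?thesis by simp
qed

lemma f_eventually: "\<exists>U. \<forall>u\<ge>U. 2 < f N u \<and> f N u < u ^ 2"
proof -
  have ev1a: "\<forall>\<^sub>F u in at_top. (\<Sum>n=1..N. poly (P (n - 1)) (ln (ln u)) / (ln u) ^ n) < 1/2"
    by (rule order_tendstoD(2)[OF S_lim]) simp
  have ev1b: "\<forall>\<^sub>F u in at_top. -1/2 < (\<Sum>n=1..N. poly (P (n - 1)) (ln (ln u)) / (ln u) ^ n)"
    by (rule order_tendstoD(1)[OF S_lim]) simp
  have ev1: "\<forall>\<^sub>F u in at_top. \<bar>\<Sum>n=1..N. poly (P (n - 1)) (ln (ln u)) / (ln u) ^ n\<bar> < 1/2"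
    using ev1a ev1b by eventually_elim auto
  have ev2a: "\<forall>\<^sub>F u::real in at_top. 3 * ln u < 2 * u" by real_asymp
  have ev2b: "\<forall>\<^sub>F u::real in at_top. 4 < u * ln u" by real_asymp
  have ev2: "\<forall>\<^sub>F u::real in at_top. 3 * ln u < 2 * u \<and> 4 < u * ln u"
    using ev2a ev2b by (rule eventually_conj)
  have "\<forall>\<^sub>F u::real in at_top. 2 < f N u \<and> f N u < u ^ 2"
    using ev1 ev2 eventually_gt_at_top[of 1]
  proof eventually_elim
    case (elim u)
    define S where "S = (\<Sum>n=1..N. poly (P (n - 1)) (ln (ln u)) / (ln u) ^ n)"
    have fu: "f N u = ln u * u * (1 + S)" by (simp add: f_def S_def)
    have Sb: "\<bar>S\<bar> < 1/2" using elim by (simp add: S_def)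
    define x where "x = u * ln u"
    have x4: "4 < x" using elim by (simp add: x_def)
    have fx: "f N u = (1 + S) * x" using fu by (simp add: x_def algebra_simps)
    have a1: "x / 2 \<le> (1 + S) * x" using Sb x4 by (intro order.trans[OF _ mult_right_mono[of "1/2" "1+S" x]]) auto
    have a2: "(1 + S) * x \<le> 3 * x / 2" using Sb x4 by (intro order.trans[OF mult_right_mono[of "1+S" "3/2" x]]) auto
    have a3: "3 * x < 2 * u ^ 2"
    proof -
      have "u * (3 * ln u) < u * (2 * u)" using elim by (intro mult_strict_left_mono) auto
      then show ?thesis by (simp add: x_def power2_eq_square algebra_simps)
    qed
    have "2 < f N u" using fx a1 x4 by linarith
    moreover have "f N u < u ^ 2" using fx a2 a3 by linarith
    ultimately show ?case by simp
  qed
  then show ?thesis by (simp add: eventually_at_top_linorder)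
qed

lemma f_cont: assumes "1 < u" shows "isCont (f N) u"
proof -
  have "isCont (\<lambda>u. ln u * u * (1 + (\<Sum>n=1..N. poly (P (n - 1)) (ln (ln u)) / (ln u) ^ n))) u"
    using assms by (intro continuous_intros) auto
  then show ?thesis by (simp add: f_def[abs_def])
qed



lemma ali_unique: assumes "1 < x" "li x = u" shows "ali u = x"
  unfolding ali_def
proof (rule the_equality)
  show "1 < x \<and> li x = u" using assms by simp
  fix y assume y: "1 < y \<and> li y = u"
  show "y = x"
  proof (rule ccontr)
    assume "y \<noteq> x"
    then consider "y < x" | "x < y" by linarith
    then show False
    proof cases
      case 1 then have "LI y < LI x" using y by (intro LI_strict_mono) auto
      then show False using y assms li_eq by force
    next
      case 2 then have "LI x < LI y" using assms by (intro LI_strict_mono) auto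
      then show False using y assms li_eq by force
    qed
  qed
qed

lemma li_root:
  assumes "2 \<le> b" "u \<le> LI b"
  shows "\<exists>x. 1 < x \<and> x \<le> b \<and> li x = u"
proof -
  define x0 where "x0 = 1 + exp (min 0 (u - ell))"
  have x0: "1 < x0" "x0 \<le> 2" unfolding x0_def by auto
  have "LI x0 \<le> ell + ln (x0 - 1)" using x0 by (intro LI_near1) auto
  also have "\<dots> \<le> u" unfolding x0_def by simp
  finally have "LI x0 \<le> u" .
  then obtain x where x: "x \<ge> x0" "x \<le> b" "LI x = u"
    using IVT'[of LI x0 u b] assms x0 LI_cont[of x0 b] by auto
  then show ?thesis using li_eq[of x] x0 by (intro exI[of _ x]) auto
qed

lemma LI_sq_big:
  fixes w :: real
  assumes "7 \<le> ln w" "0 < w"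
  shows "43/4 * w < LI (w^2)"
proof -
  define L where "L = ln w"
  have w23: "23 * L \<le> w" using exp_ge_23[of L] assms by (simp add: L_def)
  have Lw: "7 * 161 \<le> L * w" using assms w23 unfolding L_def[symmetric]
    by (intro mult_mono) auto
  have A: "23 * (L * w) \<le> w * w" using w23 assms by (simp add: mult_right_mono algebra_simps)
  have ww: "43/2 * (L * w) < w * w - 2" using A Lw by linarith
  have w2: "2 \<le> w ^ 2" using ww Lw by (simp add: power2_eq_square)
  have lnw2: "ln (w ^ 2) = 2 * L" using assms by (simp add: L_def ln_realpow)
  have Lpos: "0 < L" using assms(1) unfolding L_def by linarith
  have "43/4 * w < (w ^ 2 - 2) / ln (w ^ 2)"
    unfolding lnw2 using ww Lpos by (simp add: field_simps power2_eq_square)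
  also have "\<dots> \<le> LI (w ^ 2)" using LI_ge w2 by blast
  finally show ?thesis .
qed

lemma E_bound:
  fixes N :: nat and c L u :: real
  assumes "0 < c" "fact N < c ^ N" "c \<le> L / ln L" "7 \<le> L" "4 * (real N + 1) / 3 \<le> L" "0 < u"
  shows "13 * fact (N + 1) * (u * (ln L) ^ N / L ^ (N + 1)) \<le> 39/4 * u"
proof -
  have Lpos: "0 < L" using assms by simp
  have lnL: "0 < ln L" using assms by simp
  define r where "r = ln L / L"
  have rpos: "0 < r" using Lpos lnL by (simp add: r_def)
  have "c ^ N \<le> (L / ln L) ^ N" using assms by (intro power_mono) auto
  also have "(L / ln L) = 1 / r" by (simp add: r_def)
  finally have "fact N < (1 / r) ^ N" using assms by simp
  then have fr: "fact N * r ^ N < 1" using rpos by (simp add: power_one_over field_simps)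
  have eq: "13 * fact (N + 1) * (u * (ln L) ^ N / L ^ (N + 1)) = 13 * (real N + 1) * (fact N * r ^ N) * (u / L)"
    using Lpos by (simp add: r_def power_divide field_simps)
  have "13 * (real N + 1) * (fact N * r ^ N) * (u / L) \<le> 13 * (real N + 1) * 1 * (u / L)"
    using fr Lpos assms by (intro mult_right_mono mult_left_mono) auto
  also have "\<dots> = 13 * u * ((real N + 1) / L)" by simp
  also have "\<dots> \<le> 13 * u * (3 / 4)"
    using assms Lpos by (intro mult_left_mono) (auto simp: field_simps)
  finally show ?thesis using eq by simp
qed


theorem theorem5p16:
  fixes N :: nat and c d \<alpha> \<beta> xN v :: real
  assumes N: "N \<ge> 1"
    and c_pos: "c > 0"
    and c_prop: "\<forall>x::real. x \<ge> c \<longrightarrow> x * (1 - (\<Sum>n=1..N. fact n / x ^ n)) \<ge> 1"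
    and d_pos: "d > 0"
    and d_prop: "\<forall>x::complex. norm x \<ge> d \<longrightarrow>
        (\<exists>\<theta>::complex. norm \<theta> \<le> 1 \<and>
           Ln (inverse (1 - (\<Sum>n=1..N. fact n / x ^ n)))
             = (\<Sum>n=1..N. of_int (a n) / of_nat n / x ^ n)
               + \<theta> * of_int (a (N + 1)) / of_nat (N + 1) / x ^ (N + 1))"
    and \<alpha>_def: "\<alpha> = max (exp 1) (max c d)"
    and \<beta>_ge: "\<beta> \<ge> exp 1"
    and \<beta>_sol: "\<beta> / ln \<beta> = \<alpha>"
    and xN_def: "xN = max \<beta> (max (4 * (real N + 1) / 3) (exp 2))"
    and v_gt: "v > exp xN"
    and v_prop: "\<forall>u. u > v \<longrightarrow> (\<exists>\<theta>::real. \<bar>\<theta>\<bar> \<le> 1 \<and>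
        li (f N u) - u = \<theta> * 13 * fact (N + 1) * (u * (ln (ln u)) ^ N / (ln u) ^ (N + 1)))"
  shows "\<forall>u. u \<ge> v \<longrightarrow> (\<exists>\<theta>::real. \<bar>\<theta>\<bar> \<le> 1 \<and>
        ali u = f N u + 26 * \<theta> * fact (N + 1) * u * (ln (ln u) / ln u) ^ N)"
proof -
  define E where "E u = 13 * fact (N + 1) * (u * (ln (ln u)) ^ N / (ln u) ^ (N + 1))" for u :: real
  have cN: "fact N < c ^ N"
  proof -
    have h: "c * (1 - (\<Sum>n=1..N. fact n / c ^ n)) \<ge> 1" using c_prop by auto
    have s1: "(\<Sum>n=1..N. fact n / c ^ n) < 1"
    proof (rule ccontr)
      assume "\<not> (\<Sum>n=1..N. fact n / c ^ n) < 1"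
      then have "c * (1 - (\<Sum>n=1..N. fact n / c ^ n)) \<le> 0" using c_pos
        by (intro mult_nonneg_nonpos) auto
      then show False using h by simp
    qed
    have "fact N / c ^ N \<le> (\<Sum>n=1..N. fact n / c ^ n)"
      using N c_pos by (intro member_le_sum) auto
    then have "fact N / c ^ N < 1" using s1 by simp
    then show ?thesis using c_pos by (simp add: field_simps)
  qed
  have xN7: "7 < xN" using exp2_gt xN_def by simp
  have basic: "7 \<le> ln u \<and> 0 < ln (ln u) \<and> E u \<le> 39/4 * u \<and> 0 \<le> E u \<and> 1 < u" if u: "v \<le> u" for u
  proof -
    have vpos: "0 < v" using v_gt by (smt (verit) exp_gt_zero)
    have "xN < ln v" using v_gt vpos by (metis exp_less_cancel_iff exp_ln)
    also have "ln v \<le> ln u" using u vpos by simp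
    finally have Lx: "xN < ln u" .
    have L7: "7 \<le> ln u" using Lx xN7 by simp
    have upos: "0 < u" using u vpos by simp
    have u1: "1 < u" using L7 upos by (metis exp_gt_zero exp_ln less_le_trans ln_gt_zero_imp_gt_one order_less_le_trans zero_less_numeral order.strict_trans2)
    have lnL: "0 < ln (ln u)" using L7 by simp
    have "\<beta> \<le> ln u" using Lx xN_def by simp
    then have "\<beta> / ln \<beta> \<le> ln u / ln (ln u)" using \<beta>_ge by (intro x_over_ln_mono) auto
    then have cL: "c \<le> ln u / ln (ln u)" using \<beta>_sol \<alpha>_def by simp
    have NL: "4 * (real N + 1) / 3 \<le> ln u" using Lx xN_def by simp
    have "E u \<le> 39/4 * u" unfolding E_def using E_bound[OF c_pos cN cL L7 NL upos] .
    moreover have "0 \<le> E u" unfolding E_def using upos L7 lnL u1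
      by (intro mult_nonneg_nonneg divide_nonneg_nonneg zero_le_power) auto
    ultimately show ?thesis using L7 lnL u1 by simp
  qed
  have vp: "\<bar>li (f N u) - u\<bar> \<le> E u" if uv: "v < u" for u
  proof -
    obtain \<theta> where th: "\<bar>\<theta>\<bar> \<le> 1" "li (f N u) - u = \<theta> * 13 * fact (N + 1) * (u * (ln (ln u)) ^ N / (ln u) ^ (N + 1))"
      using v_prop uv by blast
    have "li (f N u) - u = \<theta> * E u" using th(2) by (simp add: E_def mult.assoc)
    moreover have "0 \<le> E u" using basic uv by simp
    ultimately have "\<bar>li (f N u) - u\<bar> = \<bar>\<theta>\<bar> * E u" by (simp add: abs_mult)
    also have "\<dots> \<le> 1 * E u" using th(1) \<open>0 \<le> E u\<close> by (intro mult_right_mono) auto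
    finally show ?thesis by simp
  qed
  obtain U where U: "\<And>u. u \<ge> U \<Longrightarrow> 2 < f N u \<and> f N u < u ^ 2" using f_eventually[of N] by blast
  have fcont: "continuous_on {lo..hi} (f N)" if "v \<le> lo" for lo hi
    using basic that by (intro continuous_at_imp_continuous_on) (auto intro!: f_cont)
  have upper: "f N u < u ^ 2" if u0: "v < u" for u
  proof (rule ccontr)
    assume "\<not> f N u < u ^ 2"
    then have g0: "0 \<le> f N u - u ^ 2" by simp
    define u1 where "u1 = max U (u + 1)"
    have g1: "f N u1 - u1 ^ 2 \<le> 0" using U[of u1] by (simp add: u1_def)
    have cont: "continuous_on {u..u1} (\<lambda>w. f N w - w ^ 2)"
      using fcont[of u u1] u0 by (intro continuous_intros) auto
    have uu1: "u \<le> u1" by (simp add: u1_def)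
    have "\<exists>x\<ge>u. x \<le> u1 \<and> f N x - x ^ 2 = 0"
      using IVT2'[of "\<lambda>w. f N w - w ^ 2" u1 0 u, OF g1 g0 uu1 cont] by simp
    then obtain w where w: "u \<le> w" "w \<le> u1" "f N w - w ^ 2 = 0" by blast
    have wv: "v < w" using w u0 by simp
    have bw: "7 \<le> ln w" "E w \<le> 39/4 * w" "1 < w" using basic wv by auto
    have fw: "f N w = w ^ 2" using w by simp
    have "\<bar>li (w ^ 2) - w\<bar> \<le> E w" using vp[OF wv] fw by simp
    moreover have "li (w ^ 2) = LI (w ^ 2)" using bw by (intro li_eq) (simp add: one_less_power)
    moreover have "43/4 * w < LI (w ^ 2)" using LI_sq_big bw by simp
    ultimately show False using bw by linarith
  qed
  have lower: "1 < f N u" if u0: "v \<le> u" for u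
  proof (rule ccontr)
    assume "\<not> 1 < f N u"
    then have g0: "f N u \<le> 1" by simp
    define u1 where "u1 = max U (u + 1)"
    have "1 < u" using basic[OF u0] by simp
    then have u1pos: "0 < u1" unfolding u1_def by linarith
    define cc where "cc = 1 + exp (min 0 (- 9 * u1 - ell))"
    have cc: "1 < cc" "cc \<le> 2" unfolding cc_def by auto
    have "LI cc \<le> ell + ln (cc - 1)" using cc by (intro LI_near1) auto
    also have "\<dots> \<le> - 9 * u1" unfolding cc_def by simp
    finally have LIc: "LI cc \<le> - 9 * u1" .
    have g1: "cc \<le> f N u1" using U[of u1] cc by (simp add: u1_def)
    have uu1: "u \<le> u1" by (simp add: u1_def)
    have g0': "f N u \<le> cc" using g0 cc by simp
    have "\<exists>x\<ge>u. x \<le> u1 \<and> f N x = cc"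
      using IVT'[of "f N" u cc u1, OF g0' g1 uu1 fcont[OF u0]] by simp
    then obtain w where w: "u \<le> w" "w \<le> u1" "f N w = cc" by blast
    have "w \<noteq> u" using w g0 cc by auto
    then have wv: "v < w" using w u0 by simp
    have bw: "E w \<le> 39/4 * w" "1 < w" using basic wv by auto
    have "\<bar>li cc - w\<bar> \<le> E w" using vp[OF wv] w by simp
    moreover have "li cc = LI cc" using cc by (intro li_eq) simp
    ultimately show False using bw LIc w u1pos by linarith
  qed
  have core: "\<exists>\<theta>::real. \<bar>\<theta>\<bar> \<le> 1 \<and> ali u = f N u + 26 * \<theta> * fact (N + 1) * u * (ln (ln u) / ln u) ^ N"
    if u: "v \<le> u" and fu2: "f N u \<le> u ^ 2" and fE: "\<bar>li (f N u) - u\<bar> \<le> E u" for u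
  proof -
    have bu: "7 \<le> ln u" "0 < ln (ln u)" "0 \<le> E u" "1 < u" using basic u by auto
    define L where "L = ln u"
    have Lpos: "0 < L" using bu L_def by simp
    have y1: "1 < f N u" using lower u by simp
    have "43/4 * u < LI (u ^ 2)" using LI_sq_big bu by simp
    then have "u \<le> LI (u ^ 2)" using bu by simp
    moreover have "2 \<le> u ^ 2"
    proof -
      have "23 * ln u \<le> exp (ln u)" using exp_ge_23 bu(1) by blast
      then have u2: "2 \<le> u" using bu by simp
      have "2 * 1 \<le> u * u" using u2 by (intro mult_mono) auto
      then show ?thesis by (simp add: power2_eq_square)
    qed
    ultimately obtain x where x: "1 < x" "x \<le> u ^ 2" "li x = u" using li_root by blast
    have ax: "ali u = x" using ali_unique x by simp
    define y where "y = f N u"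
    have LIx: "LI x = u" using x li_eq by simp
    have LIy: "\<bar>LI y - LI x\<bar> \<le> E u" using fE y1 li_eq LIx unfolding y_def by simp
    have ln2: "ln (u ^ 2) = 2 * L" using bu by (simp add: L_def ln_realpow)
    have "ln y \<le> ln (u ^ 2)" using fu2 y1 unfolding y_def by (subst ln_le_cancel_iff) auto
    then have lny: "ln y \<le> 2 * L" "0 < ln y" using y1 ln2 unfolding y_def by auto
    have "ln x \<le> ln (u ^ 2)" using x by (subst ln_le_cancel_iff) auto
    then have lnx: "ln x \<le> 2 * L" "0 < ln x" using x ln2 by auto
    have diff: "\<bar>x - y\<bar> \<le> E u * (2 * L)"
    proof (cases "x \<le> y")
      case True
      have "y - x \<le> (LI y - LI x) * ln y" using LI_lower[OF x(1) True] .
      also have "\<dots> \<le> E u * ln y" using LIy lny by (intro mult_right_mono) auto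
      also have "\<dots> \<le> E u * (2 * L)" using lny bu by (intro mult_left_mono) auto
      finally show ?thesis using True by simp
    next
      case False
      then have yx: "y \<le> x" by simp
      have "x - y \<le> (LI x - LI y) * ln x" using LI_lower[OF _ yx] y1 unfolding y_def by simp
      also have "\<dots> \<le> E u * ln x" using LIy lnx by (intro mult_right_mono) auto
      also have "\<dots> \<le> E u * (2 * L)" using lnx bu by (intro mult_left_mono) auto
      finally show ?thesis using yx by simp
    qed
    define D where "D = 26 * fact (N + 1) * u * (ln (ln u) / ln u) ^ N"
    have DE: "D = E u * (2 * L)" unfolding D_def E_def L_def using Lpos
      by (simp add: power_divide field_simps L_def)
    have Dpos: "0 < D" unfolding D_def using bu by simp
    define \<theta> where "\<theta> = (x - y) / D"
    have "\<bar>\<theta>\<bar> \<le> 1" unfolding \<theta>_def using diff DE Dpos by (simp add: abs_divide divide_le_eq)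
    moreover have "ali u = f N u + 26 * \<theta> * fact (N + 1) * u * (ln (ln u) / ln u) ^ N"
    proof -
      have "26 * \<theta> * fact (N + 1) * u * (ln (ln u) / ln u) ^ N = \<theta> * D" by (simp add: D_def)
      also have "\<dots> = x - y" unfolding \<theta>_def using Dpos by simp
      finally show ?thesis using ax unfolding y_def by simp
    qed
    ultimately show ?thesis by blast
  qed
  have bv: "7 \<le> ln v" "0 < ln (ln v)" "1 < v" using basic by auto
  have fv1: "1 < f N v" using lower by simp
  have atne: "at_right v \<noteq> bot" by simp
  have fv2: "f N v \<le> v ^ 2"
  proof -
    have "((\<lambda>u. f N u - u ^ 2) \<longlongrightarrow> f N v - v ^ 2) (at_right v)"
      using f_cont[OF bv(3)] by (intro tendsto_intros) (auto simp: isCont_def filterlim_at_split)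
    moreover have "\<forall>\<^sub>F u in at_right v. f N u - u ^ 2 \<le> 0"
      using upper by (auto simp: eventually_at_right_field intro!: exI[of _ "v + 1"] less_imp_le)
    ultimately have "f N v - v ^ 2 \<le> 0" using tendsto_upperbound atne by blast
    then show ?thesis by simp
  qed
  have fvE: "\<bar>li (f N v) - v\<bar> \<le> E v"
  proof -
    have icLI: "isCont LI (f N v)"
    proof (rule continuous_on_interior[OF LI_cont[of "(1 + f N v) / 2" "f N v + 1"]])
      show "1 < (1 + f N v) / 2" using fv1 by simp
      show "f N v \<in> interior {(1 + f N v) / 2..f N v + 1}" using fv1 by simp
    qed
    have icF: "isCont (\<lambda>u. LI (f N u)) v" using f_cont[OF bv(3), of N] icLI by (rule isCont_o2)
    have icE: "isCont E v" unfolding E_def[abs_def] using bv by (intro continuous_intros) auto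
    have t1: "((\<lambda>u. LI (f N u) - u - E u) \<longlongrightarrow> LI (f N v) - v - E v) (at_right v)"
      using icF icE by (intro tendsto_intros) (auto simp: isCont_def filterlim_at_split)
    have t2: "((\<lambda>u. u - LI (f N u) - E u) \<longlongrightarrow> v - LI (f N v) - E v) (at_right v)"
      using icF icE by (intro tendsto_intros) (auto simp: isCont_def filterlim_at_split)
    have ev: "\<forall>\<^sub>F u in at_right v. \<bar>LI (f N u) - u\<bar> \<le> E u"
      unfolding eventually_at_right_field
    proof (rule exI[of _ "v + 1"], intro conjI allI impI)
      fix u assume u: "v < u" "u < v + 1"
      show "\<bar>LI (f N u) - u\<bar> \<le> E u" using vp[OF u(1)] lower[of u] u li_eq[of "f N u"] by simp
    qed simp
    have e1: "\<forall>\<^sub>F u in at_right v. LI (f N u) - u - E u \<le> 0" using ev by eventually_elim simp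
    have e2: "\<forall>\<^sub>F u in at_right v. u - LI (f N u) - E u \<le> 0" using ev by eventually_elim simp
    have "LI (f N v) - v - E v \<le> 0" using tendsto_upperbound[OF t1 e1 atne] .
    moreover have "v - LI (f N v) - E v \<le> 0" using tendsto_upperbound[OF t2 e2 atne] .
    ultimately show ?thesis using li_eq[OF fv1] by simp
  qed
  show ?thesis
  proof (intro allI impI)
    fix u assume u: "v \<le> u"
    show "\<exists>\<theta>::real. \<bar>\<theta>\<bar> \<le> 1 \<and> ali u = f N u + 26 * \<theta> * fact (N + 1) * u * (ln (ln u) / ln u) ^ N"
    proof (cases "u = v")
      case True
      then show ?thesis using core[OF _ fv2 fvE] by simp
    next
      case False
      then have "v < u" using u by simp
      then show ?thesis using core[OF u less_imp_le[OF upper] vp] by simp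
    qed
  qed
qed


end
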